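(* For every $n\ge 0$, if $B_n$ is the Boolean lattice of subsets of an $n$-element set, then $\mathcal{M}(B_n,t)=(t+1)^n(t-1)^{2n}$.
   Context: $B_n$ is ranked by cardinality, $\mathrm{rk}(B_n)=n$, and $\rho(x,y,z)=3n-\mathrm{rk}(x)-\mathrm{rk}(y)-\mathrm{rk}(z)$. Let $\delta_3(x,y,z)=1$ if $x=y=z$ and $0$ otherwise, and $J$ the unique integer-valued function on triples $x\le y\le z$ with $\sum_{x\le a\le y\le b\le z}J(a,y,b)=\delta_3(x,y,z)$ for all $x\le y\le z$. Then $\mathcal{M}(B_n,t)=\sum_{x\le y\le z}J(x,y,z)\,t^{\rho(x,y,z)}$. *)

theory Defs
  imports "HOL-Computational_Algebra.Polynomial"
begin

text \<open>The Boolean lattice B_n: subsets of the n-element set {0..<n}, ordered by inclusion,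
  ranked by cardinality.\<close>
definition Bn :: "nat \<Rightarrow> nat set set" where
  "Bn n = Pow {..<n}"

definition chains3 :: "nat \<Rightarrow> (nat set \<times> nat set \<times> nat set) set" where
  "chains3 n = {(x, y, z). x \<in> Bn n \<and> y \<in> Bn n \<and> z \<in> Bn n \<and> x \<subseteq> y \<and> y \<subseteq> z}"

definition delta3 :: "'a \<Rightarrow> 'a \<Rightarrow> 'a \<Rightarrow> int" where
  "delta3 x y z = (if x = y \<and> y = z then 1 else 0)"

text \<open>J is a function on triples x \<le> y \<le> z only; to make it a unique total HOL function
  we normalise it to 0 off such triples.\<close>
definition J_cond :: "nat \<Rightarrow> (nat set \<Rightarrow> nat set \<Rightarrow> nat set \<Rightarrow> int) \<Rightarrow> bool" where
  "J_cond n J \<longleftrightarrow>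
     (\<forall>(x, y, z) \<in> chains3 n.
        (\<Sum>(a, b) \<in> {(a, b). a \<in> Bn n \<and> b \<in> Bn n \<and> x \<subseteq> a \<and> a \<subseteq> y \<and> y \<subseteq> b \<and> b \<subseteq> z}.
            J a y b) = delta3 x y z) \<and>
     (\<forall>x y z. (x, y, z) \<notin> chains3 n \<longrightarrow> J x y z = 0)"

definition J_Bn :: "nat \<Rightarrow> nat set \<Rightarrow> nat set \<Rightarrow> nat set \<Rightarrow> int" where
  "J_Bn n = (THE J. J_cond n J)"

definition rho_Bn :: "nat \<Rightarrow> nat set \<Rightarrow> nat set \<Rightarrow> nat set \<Rightarrow> nat" where
  "rho_Bn n x y z = 3 * n - card x - card y - card z"

definition M_Bn :: "nat \<Rightarrow> int poly" where
  "M_Bn n = (\<Sum>(x, y, z) \<in> chains3 n. smult (J_Bn n x y z) (monom 1 (rho_Bn n x y z)))"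

end

theory Submission
  imports Defs "HOL-Library.FuncSet"
begin

lemma alt_sum:
  assumes "finite S" "U \<subseteq> S"
  shows "(\<Sum>T | T \<subseteq> S \<and> U \<subseteq> T. (-1::int) ^ card T) = (if U = S then (-1) ^ card S else 0)"
proof (cases "U = S")
  case True
  then have "{T. T \<subseteq> S \<and> U \<subseteq> T} = {S}" by auto
  then show ?thesis using True by simp
next
  case False
  then have "U \<subset> S" using assms by auto
  then show ?thesis using False assms
    by (simp add: sum_alternating_cancels card_subsupersets_even_odd)
qed

definition J0 :: "nat \<Rightarrow> nat set \<Rightarrow> nat set \<Rightarrow> nat set \<Rightarrow> int" where
  "J0 n x y z = (if (x, y, z) \<in> chains3 n then (-1) ^ (card x + card z) else 0)"

lemma fin_Bn: "a \<in> Bn n \<Longrightarrow> finite a"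
  unfolding Bn_def by (auto intro: finite_subset)

lemma J0_sum:
  assumes "(x, y, z) \<in> chains3 n"
  shows "(\<Sum>(a, b) \<in> {(a, b). a \<in> Bn n \<and> b \<in> Bn n \<and> x \<subseteq> a \<and> a \<subseteq> y \<and> y \<subseteq> b \<and> b \<subseteq> z}.
            J0 n a y b) = delta3 x y z"
proof -
  from assms have xy: "x \<subseteq> y" and yz: "y \<subseteq> z" and zB: "z \<in> Bn n"
    by (auto simp: chains3_def)
  have fz: "finite z" using zB fin_Bn by blast
  have fy: "finite y" using fz yz finite_subset by blast
  have set_eq: "{(a, b). a \<in> Bn n \<and> b \<in> Bn n \<and> x \<subseteq> a \<and> a \<subseteq> y \<and> y \<subseteq> b \<and> b \<subseteq> z}
      = {a. a \<subseteq> y \<and> x \<subseteq> a} \<times> {b. b \<subseteq> z \<and> y \<subseteq> b}"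
    using zB yz unfolding Bn_def by auto
  have "(\<Sum>(a, b) \<in> {(a, b). a \<in> Bn n \<and> b \<in> Bn n \<and> x \<subseteq> a \<and> a \<subseteq> y \<and> y \<subseteq> b \<and> b \<subseteq> z}.
            J0 n a y b) = (\<Sum>(a, b) \<in> {a. a \<subseteq> y \<and> x \<subseteq> a} \<times> {b. b \<subseteq> z \<and> y \<subseteq> b}.
            (-1) ^ card a * (-1) ^ card b)"
    unfolding set_eq
    apply (rule sum.cong[OF refl])
    using zB yz unfolding J0_def chains3_def Bn_def by (auto simp: power_add) blast+
  also have "\<dots> = (\<Sum>a | a \<subseteq> y \<and> x \<subseteq> a. (-1::int) ^ card a) * (\<Sum>b | b \<subseteq> z \<and> y \<subseteq> b. (-1) ^ card b)"
    by (simp add: sum_product sum.cartesian_product)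
  also have "\<dots> = delta3 x y z"
    using alt_sum[OF fy xy] alt_sum[OF fz yz] unfolding delta3_def
    by (auto simp flip: power_add)
  finally show ?thesis .
qed

lemma J0_cond: "J_cond n (J0 n)"
  unfolding J_cond_def using J0_sum by (auto simp: J0_def[of n x y z for x y z])

lemma J_unique:
  assumes JC: "J_cond n J"
  shows "J = J0 n"
proof -
  have main: "J a y b = J0 n a y b" if "(a, y, b) \<in> chains3 n" for a y b
    using that
  proof (induction "card b - card a" arbitrary: a y b rule: less_induct)
    case less
    let ?T = "{(a', b'). a' \<in> Bn n \<and> b' \<in> Bn n \<and> a \<subseteq> a' \<and> a' \<subseteq> y \<and> y \<subseteq> b' \<and> b' \<subseteq> b}"
    have finT: "finite ?T"
      by (rule finite_subset[of _ "Bn n \<times> Bn n"]) (auto simp: Bn_def)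
    have memT: "(a, b) \<in> ?T" using less.prems by (auto simp: chains3_def)
    have E1: "J a y b + (\<Sum>p \<in> ?T - {(a, b)}. case p of (a', b') \<Rightarrow> J a' y b') = delta3 a y b"
      using JC less.prems unfolding J_cond_def
      using sum.remove[OF finT memT, of "\<lambda>p. case p of (a', b') \<Rightarrow> J a' y b'"] by auto
    have E2: "J0 n a y b + (\<Sum>p \<in> ?T - {(a, b)}. case p of (a', b') \<Rightarrow> J0 n a' y b') = delta3 a y b"
      using J0_sum[OF less.prems]
      using sum.remove[OF finT memT, of "\<lambda>p. case p of (a', b') \<Rightarrow> J0 n a' y b'"] by auto
    have "(\<Sum>p \<in> ?T - {(a, b)}. case p of (a', b') \<Rightarrow> J a' y b') = (\<Sum>p \<in> ?T - {(a, b)}. case p of (a', b') \<Rightarrow> J0 n a' y b')"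
    proof (rule sum.cong[OF refl])
      fix p assume p: "p \<in> ?T - {(a, b)}"
      obtain a' b' where pe: "p = (a', b')" by (cases p)
      have ch: "(a', y, b') \<in> chains3 n" using p pe less.prems by (auto simp: chains3_def)
      have fb: "finite b" using less.prems fin_Bn by (auto simp: chains3_def)
      have sub: "a \<subseteq> a'" "a' \<subseteq> b'" "b' \<subseteq> b" "(a', b') \<noteq> (a, b)" using p pe by auto
      have fb': "finite b'" using fb sub finite_subset by blast
      have fa': "finite a'" using fb' sub finite_subset by blast
      have c1: "card a \<le> card a'" "card a' \<le> card b'" "card b' \<le> card b"
        using sub fb fb' fa' by (auto intro: card_mono)
      have "a \<subset> a' \<or> b' \<subset> b" using sub by auto
      then have "card a < card a' \<or> card b' < card b"
        using fa' fb by (auto intro: psubset_card_mono)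
      then have "card b' - card a' < card b - card a" using c1 by linarith
      then show "(case p of (a', b') \<Rightarrow> J a' y b') = (case p of (a', b') \<Rightarrow> J0 n a' y b')"
        using less.hyps ch pe by auto
    qed
    then show ?case using E1 E2 by linarith
  qed
  show ?thesis
  proof (intro ext)
    fix a y b
    show "J a y b = J0 n a y b"
    proof (cases "(a, y, b) \<in> chains3 n")
      case True then show ?thesis by (rule main)
    next
      case False then show ?thesis using JC by (simp add: J_cond_def J0_def)
    qed
  qed
qed

lemma J_Bn_eq: "J_Bn n = J0 n"
  unfolding J_Bn_def
  by (rule the_equality[of "J_cond n", OF J0_cond J_unique])

definition Phi :: "nat \<Rightarrow> (nat \<Rightarrow> nat) \<Rightarrow> nat set \<times> nat set \<times> nat set" where
  "Phi n f = ({i\<in>{..<n}. f i = 3}, {i\<in>{..<n}. 2 \<le> f i}, {i\<in>{..<n}. 1 \<le> f i})"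

definition Psi :: "nat \<Rightarrow> nat set \<times> nat set \<times> nat set \<Rightarrow> nat \<Rightarrow> nat" where
  "Psi n t = (case t of (x, y, z) \<Rightarrow> (\<lambda>i. if i < n then
      (if i \<in> x then 1 else 0) + (if i \<in> y then 1 else 0) + (if i \<in> z then 1 else 0) else undefined))"

lemma bij_Phi: "bij_betw (Phi n) (PiE {..<n} (\<lambda>_. {0..3})) (chains3 n)"
proof (rule bij_betw_byWitness[where f' = "Psi n"])
  show "\<forall>a\<in>PiE {..<n} (\<lambda>_. {0..3}). Psi n (Phi n a) = a"
  proof
    fix f assume f: "f \<in> PiE {..<n} (\<lambda>_. {0..3::nat})"
    show "Psi n (Phi n f) = f"
    proof
      fix i show "Psi n (Phi n f) i = f i"
      proof (cases "i < n")
        case True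
        then have "f i \<in> {0..3}" using f by auto
        then have "f i = 0 \<or> f i = 1 \<or> f i = 2 \<or> f i = 3" by auto
        then show ?thesis using True unfolding Psi_def Phi_def by auto
      next
        case False
        then show ?thesis using f unfolding Psi_def Phi_def by (auto simp: PiE_def extensional_def)
      qed
    qed
  qed
  show "\<forall>a'\<in>chains3 n. Phi n (Psi n a') = a'"
  proof
    fix t assume t: "t \<in> chains3 n"
    obtain x y z where te: "t = (x, y, z)" by (cases t)
    have c: "x \<subseteq> y" "y \<subseteq> z" "z \<subseteq> {..<n}" using t te by (auto simp: chains3_def Bn_def)
    let ?g = "\<lambda>i. (if i \<in> x then 1 else 0) + (if i \<in> y then 1 else 0) + (if i \<in> z then 1 else (0::nat))"
    have ps: "Psi n (x, y, z) = (\<lambda>i. if i < n then ?g i else undefined)" unfolding Psi_def by simp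
    have "\<And>i. i \<in> x \<Longrightarrow> i \<in> y" "\<And>i. i \<in> y \<Longrightarrow> i \<in> z" "\<And>i. i \<in> z \<Longrightarrow> i < n" using c by auto
    then have sets: "{i\<in>{..<n}. ?g i = 3} = x" "{i\<in>{..<n}. 2 \<le> ?g i} = y" "{i\<in>{..<n}. 1 \<le> ?g i} = z"
      by auto
    have eqPhi: "Phi n (Psi n t) = ({i\<in>{..<n}. ?g i = 3}, {i\<in>{..<n}. 2 \<le> ?g i}, {i\<in>{..<n}. 1 \<le> ?g i})"
      unfolding te ps Phi_def by auto
    have "Phi n (Psi n t) = (x, y, z)" unfolding eqPhi sets by (rule refl)
    then show "Phi n (Psi n t) = t" using te by simp
  qed
  show "Phi n ` PiE {..<n} (\<lambda>_. {0..3}) \<subseteq> chains3 n"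
  proof
    fix t assume "t \<in> Phi n ` PiE {..<n} (\<lambda>_. {0..3})"
    then obtain f where t: "t = Phi n f" by blast
    show "t \<in> chains3 n" unfolding t Phi_def chains3_def Bn_def by auto
  qed
  show "Psi n ` chains3 n \<subseteq> PiE {..<n} (\<lambda>_. {0..3})"
  proof
    fix g assume "g \<in> Psi n ` chains3 n"
    then obtain x y z where g: "g = Psi n (x, y, z)" by auto
    show "g \<in> PiE {..<n} (\<lambda>_. {0..3})"
      unfolding g Psi_def by (rule PiE_I) auto
  qed
qed

lemma card_filter_sum: "finite A \<Longrightarrow> card {i\<in>A. P i} = (\<Sum>i\<in>A. if P i then 1 else 0)"
  by (simp add: sum.If_cases Int_def conj_commute)

lemma smult_prod: "finite A \<Longrightarrow> (\<Prod>i\<in>A. smult (c i) (p i)) = smult (\<Prod>i\<in>A. c i) (\<Prod>i\<in>A. p i)"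
  apply (induction A rule: finite_induct)
   apply (auto simp: mult_smult_left mult_smult_right)
  apply (simp add: mult.commute)
  done

definition sg :: "nat \<Rightarrow> nat" where
  "sg k = (if k = 3 then 1 else 0) + (if 1 \<le> k then 1 else 0)"

definition q :: "nat \<Rightarrow> int poly" where
  "q k = smult ((-1) ^ sg k) ([:0, 1:] ^ (3 - k))"

lemma key:
  assumes f: "f \<in> PiE {..<n} (\<lambda>_. {0..3::nat})"
  shows "(case Phi n f of (x, y, z) \<Rightarrow> smult (J0 n x y z) (monom 1 (rho_Bn n x y z)))
         = (\<Prod>i<n. q (f i))"
proof -
  have f3: "\<And>i. i < n \<Longrightarrow> f i \<le> 3" using f by auto
  let ?x = "{i\<in>{..<n}. f i = 3}" and ?y = "{i\<in>{..<n}. 2 \<le> f i}" and ?z = "{i\<in>{..<n}. 1 \<le> f i}"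
  have ch: "(?x, ?y, ?z) \<in> chains3 n" unfolding chains3_def Bn_def by auto
  have cx: "card ?x = (\<Sum>i<n. if f i = 3 then 1 else 0)" by (rule card_filter_sum) simp
  have cy: "card ?y = (\<Sum>i<n. if 2 \<le> f i then 1 else 0)" by (rule card_filter_sum) simp
  have cz: "card ?z = (\<Sum>i<n. if 1 \<le> f i then 1 else 0)" by (rule card_filter_sum) simp
  have sxz: "card ?x + card ?z = (\<Sum>i<n. sg (f i))"
    unfolding cx cz sg_def by (simp add: sum.distrib)
  have sxyz: "card ?x + card ?y + card ?z = (\<Sum>i<n. f i)"
  proof -
    have "card ?x + card ?y + card ?z = (\<Sum>i<n. (if f i = 3 then 1 else 0) + (if 2 \<le> f i then 1 else 0) + (if 1 \<le> f i then 1 else 0))"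
      unfolding cx cy cz by (simp add: sum.distrib)
    also have "\<dots> = (\<Sum>i<n. f i)"
    proof (rule sum.cong[OF refl])
      fix i assume "i \<in> {..<n}"
      then have "f i \<le> 3" using f3 by auto
      then have "f i = 0 \<or> f i = 1 \<or> f i = 2 \<or> f i = 3" by auto
      then show "(if f i = 3 then 1 else 0) + (if 2 \<le> f i then 1 else 0) + (if 1 \<le> f i then 1 else 0) = f i"
        by auto
    qed
    finally show ?thesis .
  qed
  have rho: "rho_Bn n ?x ?y ?z = (\<Sum>i<n. 3 - f i)"
  proof -
    have "(\<Sum>i<n. 3 - f i) = (\<Sum>i<n. 3) - (\<Sum>i<n. f i)"
      by (rule sum_subtractf_nat) (auto intro: f3)
    then show ?thesis unfolding rho_Bn_def using sxyz by simp
  qed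
  have "(case Phi n f of (x, y, z) \<Rightarrow> smult (J0 n x y z) (monom 1 (rho_Bn n x y z)))
     = smult (J0 n ?x ?y ?z) (monom 1 (rho_Bn n ?x ?y ?z))"
    by (simp only: Phi_def prod.case)
  also have "J0 n ?x ?y ?z = (-1) ^ (card ?x + card ?z)"
    unfolding J0_def using ch by simp
  also have "smult ((-1) ^ (card ?x + card ?z)) (monom 1 (rho_Bn n ?x ?y ?z))
     = smult ((-1) ^ (\<Sum>i<n. sg (f i))) ([:0, 1:] ^ (\<Sum>i<n. 3 - f i))"
    unfolding sxz rho monom_altdef by simp
  also have "\<dots> = (\<Prod>i<n. q (f i))"
    unfolding q_def power_sum by (simp add: smult_prod)
  finally show ?thesis .
qed

lemma qsum: "(\<Sum>k\<in>{0..3}. q k) = [:1, 1:] * [:-1, 1:] ^ 2"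
  by (simp add: q_def sg_def numeral_eq_Suc atLeastAtMostSuc_conv)

theorem proposition6p8:
  fixes n :: nat
  shows "M_Bn n = [:1, 1:] ^ n * [:-1, 1:] ^ (2 * n)"
proof -
  have "M_Bn n = (\<Sum>t\<in>chains3 n. case t of (x, y, z) \<Rightarrow> smult (J0 n x y z) (monom 1 (rho_Bn n x y z)))"
    unfolding M_Bn_def J_Bn_eq ..
  also have "\<dots> = (\<Sum>f\<in>PiE {..<n} (\<lambda>_. {0..3}). case Phi n f of (x, y, z) \<Rightarrow> smult (J0 n x y z) (monom 1 (rho_Bn n x y z)))"
    by (rule sum.reindex_bij_betw[OF bij_Phi, symmetric])
  also have "\<dots> = (\<Sum>f\<in>PiE {..<n} (\<lambda>_. {0..3}). \<Prod>i<n. q (f i))"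
    by (rule sum.cong[OF refl]) (rule key)
  also have "\<dots> = (\<Prod>i<n. \<Sum>k\<in>{0..3}. q k)"
    by (rule prod_sum_PiE[symmetric]) auto
  also have "\<dots> = ([:1, 1:] * [:-1, 1:] ^ 2) ^ n"
    by (simp add: qsum)
  also have "\<dots> = [:1, 1:] ^ n * [:-1, 1:] ^ (2 * n)"
    by (simp only: power_mult_distrib power_mult)
  finally show ?thesis .
qed

end
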